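(* Let $\mathcal D$ be a non-trivial $2$-$(k^{2},k,\lambda)$ design with $\lambda\mid k$, admitting a flag-transitive automorphism group $G$. Then: (1) $G$ acts primitively on the point set; (2) for every point $x$, $G_x$ is a large subgroup of $G$; (3) for every point $y\ne x$ and every block $B$ containing $x$, $|y^{G_x}|=(k+1)\,|B\cap y^{G_x}|$; in particular $k+1$ divides the length of every $G_x$-orbit on points other than $\{x\}$.
   Context: A $2$-$(v,k,\lambda)$ design consists of $v$ points and a family of $k$-subsets (blocks) such that each pair of distinct points lies in exactly $\lambda$ blocks; non-trivial means $2<k<v$. $G\le\mathrm{Aut}(\mathcal D)$ is flag-transitive if transitive on pairs $(x,B)$ with $x\in B$. $G_x$ is the point stabilizer, $y^{G_x}$ the $G_x$-orbit of $y$. A subgroup $H$ of a finite group $K$ is large if $|K|<|H|^3$. *)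

theory Defs
  imports "HOL-Combinatorics.Permutations"
begin

definition design_2 :: "'a set \<Rightarrow> 'a set set \<Rightarrow> nat \<Rightarrow> nat \<Rightarrow> nat \<Rightarrow> bool" where
  "design_2 P \<B> v k lam \<longleftrightarrow> finite P \<and> card P = v \<and>
     (\<forall>B\<in>\<B>. B \<subseteq> P \<and> card B = k) \<and>
     (\<forall>x\<in>P. \<forall>y\<in>P. x \<noteq> y \<longrightarrow> card {B\<in>\<B>. x \<in> B \<and> y \<in> B} = lam)"

definition nontrivial_design :: "'a set \<Rightarrow> 'a set set \<Rightarrow> nat \<Rightarrow> nat \<Rightarrow> nat \<Rightarrow> bool" where
  "nontrivial_design P \<B> v k lam \<longleftrightarrow> design_2 P \<B> v k lam \<and> 2 < k \<and> k < v"

definition perm_group_on :: "'a set \<Rightarrow> ('a \<Rightarrow> 'a) set \<Rightarrow> bool" where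
  "perm_group_on P G \<longleftrightarrow> (\<forall>g\<in>G. g permutes P) \<and> id \<in> G \<and>
     (\<forall>g\<in>G. \<forall>h\<in>G. g \<circ> h \<in> G) \<and> (\<forall>g\<in>G. inv g \<in> G)"

definition automorphism_group :: "'a set \<Rightarrow> 'a set set \<Rightarrow> ('a \<Rightarrow> 'a) set \<Rightarrow> bool" where
  "automorphism_group P \<B> G \<longleftrightarrow> perm_group_on P G \<and> (\<forall>g\<in>G. \<forall>B\<in>\<B>. g ` B \<in> \<B>)"

definition flag_transitive :: "'a set \<Rightarrow> 'a set set \<Rightarrow> ('a \<Rightarrow> 'a) set \<Rightarrow> bool" where
  "flag_transitive P \<B> G \<longleftrightarrow>
     (\<forall>x B x' B'. B \<in> \<B> \<and> x \<in> B \<and> B' \<in> \<B> \<and> x' \<in> B' \<longrightarrow>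
        (\<exists>g\<in>G. g x = x' \<and> g ` B = B'))"

definition transitive_on :: "'a set \<Rightarrow> ('a \<Rightarrow> 'a) set \<Rightarrow> bool" where
  "transitive_on P G \<longleftrightarrow> (\<forall>x\<in>P. \<forall>y\<in>P. \<exists>g\<in>G. g x = y)"

definition primitive_on :: "'a set \<Rightarrow> ('a \<Rightarrow> 'a) set \<Rightarrow> bool" where
  "primitive_on P G \<longleftrightarrow> transitive_on P G \<and>
     (\<forall>\<Delta>. \<Delta> \<subseteq> P \<and> (\<forall>g\<in>G. g ` \<Delta> = \<Delta> \<or> g ` \<Delta> \<inter> \<Delta> = {})
          \<longrightarrow> card \<Delta> \<le> 1 \<or> \<Delta> = P)"

definition stabilizer :: "('a \<Rightarrow> 'a) set \<Rightarrow> 'a \<Rightarrow> ('a \<Rightarrow> 'a) set" where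
  "stabilizer G x = {g\<in>G. g x = x}"

definition orbit :: "('a \<Rightarrow> 'a) set \<Rightarrow> 'a \<Rightarrow> 'a set" where
  "orbit H y = (\<lambda>g. g y) ` H"

definition large_subgroup :: "('a \<Rightarrow> 'a) set \<Rightarrow> ('a \<Rightarrow> 'a) set \<Rightarrow> bool" where
  "large_subgroup H G \<longleftrightarrow> H \<subseteq> G \<and> card G < card H ^ 3"

end

theory Submission
  imports Defs
begin

lemma card_pairs:
  assumes "finite S" "finite X"
  shows "(\<Sum>z\<in>S. card {B\<in>X. z \<in> B}) = (\<Sum>B\<in>X. card (B \<inter> S))"
proof -
  have "(\<Sum>z\<in>S. card {B\<in>X. z \<in> B}) = (\<Sum>z\<in>S. \<Sum>B\<in>X. if z\<in>B then 1 else 0)"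
    using assms by (simp add: sum.inter_filter[symmetric])
  also have "\<dots> = (\<Sum>B\<in>X. \<Sum>z\<in>S. if z\<in>B then 1 else 0)" by (rule sum.swap)
  also have "\<dots> = (\<Sum>B\<in>X. card (B\<inter>S))"
  proof (rule sum.cong[OF refl])
    fix B assume "B \<in> X"
    have "B \<inter> S = {z\<in>S. z \<in> B}" by auto
    then show "(\<Sum>z\<in>S. if z\<in>B then 1 else 0) = card (B\<inter>S)"
      using assms by (simp add: sum.inter_filter[symmetric])
  qed
  finally show ?thesis .
qed

lemma arith_contra:
  fixes c d k m :: nat
  assumes c: "c = 1 + (k+1)*m" and m: "m \<ge> 1" and cd: "c*d = k^2" and d: "d \<ge> 2" and k: "k \<ge> 1"
  shows False
proof -
  have "k+1 \<le> (k+1)*m" using mult_le_mono2[OF m, of "k+1"] by simp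
  then have ck: "c \<ge> k + 2" using c by linarith
  have cd': "c*d = k*k" using cd by (simp add: power2_eq_square)
  have dk: "d < k"
  proof (rule ccontr)
    assume "\<not> d < k"
    then have "(k+2) * k \<le> c * d" using ck by (intro mult_le_mono) auto
    moreover have "(k+2)*k = k*k + 2*k" by (simp add: distrib_right)
    ultimately show False using cd' k by linarith
  qed
  obtain j where j: "k = Suc j" using k by (cases k) auto
  have e1: "c*d = d + (k+1)*(m*d)" unfolding c by (simp add: distrib_right mult.assoc)
  have e2: "k*k = (k+1)*(k-1) + 1" unfolding j by simp
  have e: "d + (k+1)*(m*d) = (k+1)*(k-1) + 1" using e1 e2 cd' by simp
  have f1: "(d + (k+1)*(m*d)) mod (k+1) = d mod (k+1)" by (metis mod_mult_self2 mult.commute)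
  have f2: "((k+1)*(k-1) + 1) mod (k+1) = 1"
    by (metis mod_mult_self2 mult.commute add.commute mod_less less_add_same_cancel2 zero_less_one k add_strict_increasing le_add1 one_less_numeral_iff semiring_norm(76) Suc_eq_plus1 Suc_le_mono le_imp_less_Suc)
  have "d mod (k+1) = (d + (k+1)*(m*d)) mod (k+1)" using f1 by (rule sym)
  also have "\<dots> = ((k+1)*(k-1)+1) mod (k+1)" by (simp only: e)
  also have "\<dots> = 1" by (rule f2)
  finally have "d mod (k+1) = 1" .
  moreover have "d mod (k+1) = d" using dk by simp
  ultimately show False using d by simp
qed

locale fdesign =
  fixes P :: "'a set" and \<B> :: "'a set set" and G :: "('a \<Rightarrow> 'a) set"
    and k lam :: nat
  assumes des: "nontrivial_design P \<B> (k^2) k lam"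
    and dv: "lam dvd k"
    and aut: "automorphism_group P \<B> G"
    and ft: "flag_transitive P \<B> G"
begin

lemma finP: "finite P" and cardP: "card P = k^2" and k2: "2 < k"
  using des by (auto simp: nontrivial_design_def design_2_def)

lemma blk: "B \<in> \<B> \<Longrightarrow> B \<subseteq> P" "B \<in> \<B> \<Longrightarrow> card B = k"
  using des by (auto simp: nontrivial_design_def design_2_def)

lemma lamd: "x \<in> P \<Longrightarrow> y \<in> P \<Longrightarrow> x \<noteq> y \<Longrightarrow> card {B\<in>\<B>. x \<in> B \<and> y \<in> B} = lam"
  using des by (auto simp: nontrivial_design_def design_2_def)

lemma perm: "g \<in> G \<Longrightarrow> g permutes P"
  and Gcomp: "g \<in> G \<Longrightarrow> h \<in> G \<Longrightarrow> g \<circ> h \<in> G"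
  and Ginv: "g \<in> G \<Longrightarrow> inv g \<in> G"
  and Gid: "id \<in> G"
  and Gblk: "g \<in> G \<Longrightarrow> B \<in> \<B> \<Longrightarrow> g ` B \<in> \<B>"
  using aut by (auto simp: automorphism_group_def perm_group_on_def)

lemma finB: "finite \<B>"
proof -
  have "\<B> \<subseteq> Pow P" using blk(1) by blast
  moreover have "finite (Pow P)" using finP by simp
  ultimately show ?thesis by (rule finite_subset)
qed

lemma finG: "finite G"
proof -
  have "G \<subseteq> {p. p permutes P}" using perm by blast
  then show ?thesis using finite_permutations[OF finP] by (rule finite_subset)
qed

lemma lam_pos: "lam > 0"
  using dv k2 by (cases "lam = 0") auto

lemma ex_block: assumes "x \<in> P" shows "\<exists>B\<in>\<B>. x \<in> B"
proof -
  have "k \<le> k^2" by (simp add: power2_eq_square)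
  then have "k^2 \<ge> 2" using k2 by linarith
  then have c2: "card P \<ge> 2" using cardP by simp
  have "P - {x} \<noteq> {}"
  proof
    assume "P - {x} = {}"
    then have "P \<subseteq> {x}" by auto
    then have "card P \<le> 1" using card_mono[of "{x}" P] by simp
    then show False using c2 by simp
  qed
  then obtain y where y: "y \<in> P" "y \<noteq> x" by auto
  have "card {B\<in>\<B>. x \<in> B \<and> y \<in> B} = lam" using lamd[OF assms y(1)] y by auto
  then have "card {B\<in>\<B>. x \<in> B \<and> y \<in> B} > 0" using lam_pos by simp
  then have "{B\<in>\<B>. x \<in> B \<and> y \<in> B} \<noteq> {}" by (metis card.empty less_irrefl)
  then show ?thesis by auto
qed

lemma trans: "transitive_on P G"
  unfolding transitive_on_def
proof (intro ballI)
  fix x y assume "x \<in> P" "y \<in> P"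
  obtain B1 where "B1 \<in> \<B>" "x \<in> B1" using ex_block[OF \<open>x\<in>P\<close>] by auto
  moreover obtain B2 where "B2 \<in> \<B>" "y \<in> B2" using ex_block[OF \<open>y\<in>P\<close>] by auto
  ultimately show "\<exists>g\<in>G. g x = y" using ft[unfolded flag_transitive_def, rule_format, of B1 x B2 y] by blast
qed

definition Bx where "Bx x = {B\<in>\<B>. x \<in> B}"

lemma finBx: "finite (Bx x)" using finB by (simp add: Bx_def)

lemma stab_trans: assumes "B1 \<in> Bx x" "B2 \<in> Bx x"
  shows "\<exists>g\<in>stabilizer G x. g ` B1 = B2"
proof -
  have "B1 \<in> \<B>" "x \<in> B1" "B2 \<in> \<B>" "x \<in> B2" using assms by (auto simp: Bx_def)
  then obtain g where "g \<in> G" "g x = x" "g ` B1 = B2"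
    using ft[unfolded flag_transitive_def, rule_format, of B1 x B2 x] by blast
  then show ?thesis by (auto simp: stabilizer_def)
qed

lemma count: assumes "x \<in> P" "S \<subseteq> P - {x}"
  shows "card S * lam = (\<Sum>B\<in>Bx x. card (B \<inter> S))"
proof -
  have fS: "finite S" using assms finP finite_subset by blast
  have "(\<Sum>z\<in>S. card {B\<in>Bx x. z \<in> B}) = (\<Sum>z\<in>S. lam)"
  proof (rule sum.cong[OF refl])
    fix z assume "z \<in> S"
    then have "{B\<in>Bx x. z \<in> B} = {B\<in>\<B>. x \<in> B \<and> z \<in> B}" by (auto simp: Bx_def)
    then show "card {B\<in>Bx x. z \<in> B} = lam" using lamd[OF assms(1)] \<open>z\<in>S\<close> assms(2) by auto
  qed
  then show ?thesis using card_pairs[OF fS finBx, of x] by simp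
qed

lemma card_le_blk: assumes "x \<in> P" "\<forall>g\<in>stabilizer G x. g ` S \<subseteq> S"
  "B1 \<in> Bx x" "B2 \<in> Bx x"
  shows "card (B1 \<inter> S) \<le> card (B2 \<inter> S)"
proof -
  obtain g where g: "g \<in> stabilizer G x" "g ` B1 = B2" using stab_trans[OF assms(3,4)] by auto
  have gG: "g \<in> G" using g by (simp add: stabilizer_def)
  have inj: "inj_on g (B1 \<inter> S)" using permutes_inj[OF perm[OF gG]] inj_on_subset by blast
  have "g ` (B1 \<inter> S) \<subseteq> B2 \<inter> S" using g assms(2) by blast
  moreover have "finite (B2 \<inter> S)" using assms(4) blk finP finite_subset unfolding Bx_def by blast
  ultimately show ?thesis using card_inj_on_le[OF inj] by blast
qed

lemma key: assumes "x \<in> P" "S \<subseteq> P - {x}" "\<forall>g\<in>stabilizer G x. g ` S \<subseteq> S" "B0 \<in> Bx x"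
  shows "card S * lam = card (Bx x) * card (B0 \<inter> S)"
proof -
  have "(\<Sum>B\<in>Bx x. card (B \<inter> S)) = (\<Sum>B\<in>Bx x. card (B0 \<inter> S))"
  proof (rule sum.cong[OF refl])
    fix B assume "B \<in> Bx x"
    show "card (B \<inter> S) = card (B0 \<inter> S)"
      using card_le_blk[OF assms(1,3) \<open>B\<in>Bx x\<close> assms(4)] card_le_blk[OF assms(1,3) assms(4) \<open>B\<in>Bx x\<close>]
      by simp
  qed
  then show ?thesis using count[OF assms(1,2)] by simp
qed

lemma ex_Bx: "x \<in> P \<Longrightarrow> \<exists>B. B \<in> Bx x" using ex_block by (auto simp: Bx_def)

lemma r_val: assumes "x \<in> P" shows "card (Bx x) = lam * (k + 1)"
proof -
  obtain B0 where B0: "B0 \<in> Bx x" using ex_Bx[OF assms] by auto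
  have inv: "\<forall>g\<in>stabilizer G x. g ` (P - {x}) \<subseteq> P - {x}"
  proof (intro ballI subsetI)
    fix g z assume g: "g \<in> stabilizer G x" and z: "z \<in> g ` (P - {x})"
    then obtain w where w: "w \<in> P" "w \<noteq> x" "z = g w" by auto
    have p: "g permutes P" and gx: "g x = x" using g perm by (auto simp: stabilizer_def)
    have "g w \<noteq> g x" using permutes_inj[OF p] w by (meson injD)
    then show "z \<in> P - {x}" using w gx permutes_in_image[OF p] by auto
  qed
  have "card (P - {x}) * lam = card (Bx x) * card (B0 \<inter> (P - {x}))"
    using key[OF assms _ inv B0] by simp
  moreover have "card (P - {x}) = k^2 - 1" using cardP finP assms by simp
  moreover have "B0 \<inter> (P - {x}) = B0 - {x}" using B0 blk unfolding Bx_def by auto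
  moreover have "card (B0 - {x}) = k - 1" using B0 blk finP finite_subset unfolding Bx_def by auto
  ultimately have e: "(k^2 - 1) * lam = card (Bx x) * (k - 1)" by simp
  obtain j where j: "k = Suc j" using k2 by (cases k) auto
  have "k^2 - 1 = (k+1)*(k-1)" unfolding j by (simp add: power2_eq_square)
  then have "(k - 1) * (lam * (k+1)) = (k - 1) * card (Bx x)" using e by (simp only: mult.commute mult.left_commute)
  moreover have "k - 1 \<noteq> 0" using k2 by simp
  ultimately show ?thesis by (simp only: mult_cancel_left) simp
qed

lemma main3: assumes "x \<in> P" "S \<subseteq> P - {x}" "\<forall>g\<in>stabilizer G x. g ` S \<subseteq> S" "B \<in> Bx x"
  shows "card S = (k + 1) * card (B \<inter> S)"
proof -
  have "lam * card S = lam * ((k+1) * card (B \<inter> S))"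
    using key[OF assms] r_val[OF assms(1)] by (simp add: algebra_simps)
  then show ?thesis using lam_pos by simp
qed

lemma stab_G: "g \<in> stabilizer G x \<Longrightarrow> g \<in> G" and stab_x: "g \<in> stabilizer G x \<Longrightarrow> g x = x"
  by (auto simp: stabilizer_def)

lemma part3: assumes "x \<in> P" "y \<in> P" "y \<noteq> x" "B \<in> \<B>" "x \<in> B"
  shows "card (orbit (stabilizer G x) y) = (k + 1) * card (B \<inter> orbit (stabilizer G x) y)"
proof -
  have B: "B \<in> Bx x" using assms by (simp add: Bx_def)
  have S: "orbit (stabilizer G x) y \<subseteq> P - {x}"
  proof
    fix z assume "z \<in> orbit (stabilizer G x) y"
    then obtain g where g: "g \<in> stabilizer G x" "z = g y" by (auto simp: orbit_def)
    have p: "g permutes P" using perm[OF stab_G[OF g(1)]] .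
    have "g y \<noteq> g x" using permutes_inj[OF p] assms(3) by (meson injD)
    then show "z \<in> P - {x}" using g stab_x[OF g(1)] permutes_in_image[OF p] assms(2) by auto
  qed
  have I: "\<forall>g\<in>stabilizer G x. g ` orbit (stabilizer G x) y \<subseteq> orbit (stabilizer G x) y"
  proof (intro ballI subsetI)
    fix h z assume h: "h \<in> stabilizer G x" and "z \<in> h ` orbit (stabilizer G x) y"
    then obtain g where g: "g \<in> stabilizer G x" "z = h (g y)" by (auto simp: orbit_def)
    have "h \<circ> g \<in> stabilizer G x"
      using Gcomp[OF stab_G[OF h] stab_G[OF g(1)]] stab_x[OF h] stab_x[OF g(1)]
      by (simp add: stabilizer_def)
    moreover have "z = (\<lambda>f. f y) (h \<circ> g)" using g(2) by simp
    ultimately show "z \<in> orbit (stabilizer G x) y" unfolding orbit_def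
      by (intro image_eqI)
  qed
  show ?thesis by (rule main3[OF assms(1) S I B])
qed

lemma part2: assumes "x \<in> P" shows "large_subgroup (stabilizer G x) G"
proof -
  let ?S = "stabilizer G x"
  have finS: "finite ?S" using finG by (simp add: stabilizer_def)
  define h where "h y = (SOME g. g \<in> G \<and> g x = y)" for y
  have h: "h y \<in> G \<and> h y x = y" if "y \<in> P" for y
  proof -
    have "\<exists>g. g \<in> G \<and> g x = y" using trans assms that unfolding transitive_on_def by blast
    then show ?thesis unfolding h_def by (rule someI_ex)
  qed
  define \<phi> where "\<phi> g = (g x, inv (h (g x)) \<circ> g)" for g
  have "\<phi> ` G \<subseteq> P \<times> ?S"
  proof
    fix z assume "z \<in> \<phi> ` G"
    then obtain g where g: "g \<in> G" "z = \<phi> g" by auto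
    have gx: "g x \<in> P" using permutes_in_image[OF perm[OF g(1)]] assms by simp
    have hg: "h (g x) \<in> G" "h (g x) x = g x" using h[OF gx] by auto
    have "inv (h (g x)) (g x) = x" using permutes_inverses(2)[OF perm[OF hg(1)], of x] hg(2) by simp
    moreover have "inv (h (g x)) \<circ> g \<in> G" using Gcomp[OF Ginv[OF hg(1)] g(1)] .
    ultimately show "z \<in> P \<times> ?S" using g gx by (simp add: \<phi>_def stabilizer_def)
  qed
  moreover have "inj_on \<phi> G"
  proof (rule inj_onI)
    fix g1 g2 assume g: "g1 \<in> G" "g2 \<in> G" "\<phi> g1 = \<phi> g2"
    then have e1: "g1 x = g2 x" and e2: "inv (h (g1 x)) \<circ> g1 = inv (h (g1 x)) \<circ> g2"
      by (auto simp: \<phi>_def)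
    have gx: "g1 x \<in> P" using permutes_in_image[OF perm[OF g(1)]] assms by simp
    have p: "h (g1 x) permutes P" using perm h[OF gx] by blast
    have "h (g1 x) \<circ> (inv (h (g1 x)) \<circ> g1) = h (g1 x) \<circ> (inv (h (g1 x)) \<circ> g2)" using e2 by simp
    then show "g1 = g2" by (simp add: fun_eq_iff permutes_inverses(1)[OF p])
  qed
  ultimately have "card G \<le> card (P \<times> ?S)"
    using card_inj_on_le finP finS by (metis finite_SigmaI)
  then have cG: "card G \<le> k^2 * card ?S" using cardP by (simp add: card_cartesian_product)
  obtain B0 where B0: "B0 \<in> Bx x" using ex_Bx[OF assms] by auto
  have "Bx x \<subseteq> (\<lambda>g. g ` B0) ` ?S"
  proof
    fix B assume "B \<in> Bx x"
    then obtain g where "g \<in> ?S" "g ` B0 = B" using stab_trans[OF B0] by blast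
    then show "B \<in> (\<lambda>g. g ` B0) ` ?S" by auto
  qed
  then have "card (Bx x) \<le> card ?S"
    by (meson card_image_le card_mono finS finite_imageI order_trans)
  then have "lam * (k+1) \<le> card ?S" using r_val[OF assms] by simp
  moreover have "k + 1 \<le> lam * (k+1)" using mult_le_mono1[of 1 lam "k+1"] lam_pos by simp
  ultimately have ks: "k < card ?S" by simp
  then have "k^2 < (card ?S)^2" by (simp add: power_strict_mono)
  then have "card ?S * k^2 < card ?S * (card ?S)^2" using ks by simp
  moreover have "card G \<le> card ?S * k^2" using cG by (simp add: mult.commute)
  ultimately have "card G < card ?S * (card ?S)^2" by linarith
  then have "card G < card ?S ^ 3" by (simp add: power2_eq_square power3_eq_cube)
  moreover have "?S \<subseteq> G" by (auto simp: stabilizer_def)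
  ultimately show ?thesis by (simp add: large_subgroup_def)
qed

lemma part1: "primitive_on P G"
  unfolding primitive_on_def
proof (intro conjI trans allI impI)
  fix D assume H: "D \<subseteq> P \<and> (\<forall>g\<in>G. g ` D = D \<or> g ` D \<inter> D = {})"
  have DP: "D \<subseteq> P" and blkD: "\<And>g. g \<in> G \<Longrightarrow> g ` D = D \<or> g ` D \<inter> D = {}" using H by auto
  have finD: "finite D" using DP finP finite_subset by blast
  show "card D \<le> 1 \<or> D = P"
  proof (rule ccontr)
    assume "\<not> (card D \<le> 1 \<or> D = P)"
    then have c2: "card D \<ge> 2" and nP: "D \<noteq> P" by auto
    then obtain x where x: "x \<in> D" by fastforce
    have xP: "x \<in> P" using x DP by auto
    have inv: "\<forall>g\<in>stabilizer G x. g ` (D - {x}) \<subseteq> D - {x}"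
    proof (intro ballI subsetI)
      fix g z assume g: "g \<in> stabilizer G x" and "z \<in> g ` (D - {x})"
      then obtain w where w: "w \<in> D" "w \<noteq> x" "z = g w" by auto
      have gG: "g \<in> G" and gx: "g x = x" using g by (auto simp: stabilizer_def)
      have "x \<in> g ` D \<inter> D" using x gx by (metis IntI image_eqI)
      then have "g ` D = D" using blkD[OF gG] by auto
      then have "g w \<in> D" using w by auto
      moreover have "g w \<noteq> g x" using permutes_inj[OF perm[OF gG]] w by (meson injD)
      ultimately show "z \<in> D - {x}" using w gx by auto
    qed
    obtain B0 where B0: "B0 \<in> Bx x" using ex_Bx[OF xP] by auto
    define m where "m = card (B0 \<inter> (D - {x}))"
    have cS: "card (D - {x}) = (k+1) * m"
      unfolding m_def by (rule main3[OF xP _ inv B0]) (use DP in auto)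
    have cD: "card (D - {x}) = card D - 1" using finD x by simp
    have m1: "m \<ge> 1" using cS cD c2 by (cases m) auto
    have cDe: "card D = 1 + (k+1)*m" using cS cD c2 by simp
    define C where "C = (\<lambda>g. g ` D) ` G"
    have finC: "finite C" using finG by (simp add: C_def)
    have UC: "\<Union>C = P"
    proof
      show "\<Union>C \<subseteq> P" using DP perm permutes_image by (fastforce simp: C_def)
      show "P \<subseteq> \<Union>C"
      proof
        fix y assume "y \<in> P"
        then obtain g where "g \<in> G" "g x = y" using trans xP unfolding transitive_on_def by blast
        then show "y \<in> \<Union>C" using x by (auto simp: C_def)
      qed
    qed
    have pw: "pairwise disjnt C"
    proof (rule pairwiseI)
      fix A1 A2 assume A: "A1 \<in> C" "A2 \<in> C" "A1 \<noteq> A2"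
      then obtain g h where gh: "g \<in> G" "h \<in> G" "A1 = g ` D" "A2 = h ` D" by (auto simp: C_def)
      show "disjnt A1 A2"
      proof (rule ccontr)
        assume "\<not> disjnt A1 A2"
        then obtain a b where ab: "a \<in> D" "b \<in> D" "g a = h b" using gh unfolding disjnt_def by blast
        have ph: "h permutes P" using perm[OF gh(2)] .
        define f where "f = inv h \<circ> g"
        have fG: "f \<in> G" using Gcomp[OF Ginv[OF gh(2)] gh(1)] by (simp add: f_def)
        have "f a = b" using ab(3) permutes_inverses(2)[OF ph] by (simp add: f_def)
        then have "b \<in> f ` D \<inter> D" using ab by (metis IntI image_eqI)
        then have "f ` D = D" using blkD[OF fG] by auto
        then have "h ` (f ` D) = h ` D" by simp
        moreover have "h ` (f ` D) = g ` D"
          by (simp add: f_def image_comp permutes_inverses(1)[OF ph])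
        ultimately show False using gh A(3) by simp
      qed
    qed
    have cardC: "\<And>A. A \<in> C \<Longrightarrow> card A = card D"
    proof -
      fix A assume "A \<in> C"
      then obtain g where "g \<in> G" "A = g ` D" by (auto simp: C_def)
      then show "card A = card D" using permutes_inj[OF perm] card_image inj_on_subset
        by (metis subset_UNIV)
    qed
    have "card P = sum card C" using card_Union_disjoint[OF pw] UC finD cardC
      by (metis C_def finite_imageI imageE)
    also have "\<dots> = card D * card C" using cardC by simp
    finally have eq: "card D * card C = k^2" using cardP by simp
    have "D = (\<lambda>g. g ` D) id" by simp
    then have "D \<in> C" unfolding C_def using Gid by (rule image_eqI)
    have "card C \<ge> 2"
    proof (rule ccontr)
      assume "\<not> card C \<ge> 2"
      then have "card C = 0 \<or> card C = 1" by auto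
      moreover have "card C \<noteq> 0" using \<open>D \<in> C\<close> finC by auto
      ultimately have "card C = 1" by simp
      then have "card D = card P" using eq cardP by simp
      then have "D = P" using DP finP card_subset_eq by blast
      then show False using nP by simp
    qed
    then show False using arith_contra[OF cDe m1 eq] k2 by simp
  qed
qed

end

theorem lemma3p2:
  fixes P :: "'a set" and \<B> :: "'a set set" and G :: "('a \<Rightarrow> 'a) set"
    and k lam :: nat
  assumes "nontrivial_design P \<B> (k^2) k lam"
    and "lam dvd k"
    and "automorphism_group P \<B> G"
    and "flag_transitive P \<B> G"
  shows "primitive_on P G
    \<and> (\<forall>x\<in>P. large_subgroup (stabilizer G x) G)
    \<and> (\<forall>x\<in>P. \<forall>y\<in>P. y \<noteq> x \<longrightarrow>
          (\<forall>B\<in>\<B>. x \<in> B \<longrightarrow>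
             card (orbit (stabilizer G x) y) = (k + 1) * card (B \<inter> orbit (stabilizer G x) y))
          \<and> (k + 1) dvd card (orbit (stabilizer G x) y))"
proof -
  interpret fdesign P \<B> G k lam using assms by (unfold_locales) auto
  have p3: "(k + 1) dvd card (orbit (stabilizer G x) y)" if xy: "x \<in> P" "y \<in> P" "y \<noteq> x" for x y
  proof -
    obtain B where b: "B \<in> \<B>" "x \<in> B" using ex_block[OF xy(1)] by auto
    have "card (orbit (stabilizer G x) y) = (k+1) * card (B \<inter> orbit (stabilizer G x) y)"
      by (rule part3[OF xy b])
    then show ?thesis by (metis dvd_triv_left)
  qed
  show ?thesis
  proof (intro conjI ballI impI allI)
    show "primitive_on P G" by (rule part1)
    fix x assume x: "x \<in> P"
    show "large_subgroup (stabilizer G x) G" using part2[OF x] .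
    fix y assume y: "y \<in> P" and yx: "y \<noteq> x"
    show "(k + 1) dvd card (orbit (stabilizer G x) y)" using p3[OF x y yx] .
    fix B assume B: "B \<in> \<B>" and xB: "x \<in> B"
    show "card (orbit (stabilizer G x) y) = (k + 1) * card (B \<inter> orbit (stabilizer G x) y)"
      using part3[OF x y yx B xB] .
  qed
qed

end
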